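(* Let $X=G/K$ be a symmetric space of non-compact type of rank $r$, with base point, Cartan decomposition $\mathfrak g=\mathfrak k+\mathfrak p$ and $\mathfrak p$ identified with the tangent space at the base point. Let $1\le k\le r$ and suppose $Y\times\mathbb R^k\subset X$ is a totally geodesic submanifold through the base point (a Riemannian product with an isometric Euclidean $\mathbb R^k$-factor) with $\dim(Y\times\mathbb R^k)=\mathrm{srk}^k(X)$; let $V_k\subset\mathfrak p$ be the $k$-dimensional subspace tangent to the $\mathbb R^k$-factor. Then for any maximal abelian subspace $\mathfrak a\subset\mathfrak p$ containing $V_k$, the Lie triple system corresponding to $Y\times\mathbb R^k$ is $\mathfrak p'=\mathfrak a\oplus\bigoplus_{\alpha\in\Lambda^+,\ \alpha(V_k)=0}\mathfrak p_\alpha$.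
   Context: $\mathrm{srk}^k(X)$, the $k$-th splitting rank, is the maximal dimension of a totally geodesic submanifold of $X$ which splits off an isometric $\mathbb R^k$-factor. For a maximal abelian $\mathfrak a\subset\mathfrak p$, $\Lambda$ is the set of restricted roots, $\Lambda^+$ the positive roots, $\mathfrak p_\alpha=(\mathfrak g_\alpha\oplus\mathfrak g_{-\alpha})\cap\mathfrak p$. Totally geodesic submanifolds through the base point correspond to Lie triple systems $\mathfrak p'\subset\mathfrak p$ (subspaces with $[\mathfrak p',[\mathfrak p',\mathfrak p']]\subset\mathfrak p'$) via tangent spaces. *)

theory Defs
  imports "HOL-Analysis.Analysis"
begin

text \<open>Model: the Lie algebra g of the isometry group is realised as a real Lie algebra of
 n x n matrices closed under transpose; Cartan involution theta X = - transpose X,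
 k = skew part, p = symmetric part (tangent space at the base point).\<close>

definition lie_bracket :: "real^'n^'n \<Rightarrow> real^'n^'n \<Rightarrow> real^'n^'n" where
  "lie_bracket X Y = X ** Y - Y ** X"

definition self_adjoint_lie_algebra :: "(real^'n^'n) set \<Rightarrow> bool" where
  "self_adjoint_lie_algebra g \<longleftrightarrow> subspace g \<and>
     (\<forall>X\<in>g. \<forall>Y\<in>g. lie_bracket X Y \<in> g) \<and> (\<forall>X\<in>g. transpose X \<in> g)"

definition ppart :: "(real^'n^'n) set \<Rightarrow> (real^'n^'n) set" where
  "ppart g = {X \<in> g. transpose X = X}"

text \<open>Noncompact type: no Euclidean de Rham factor, i.e. the Lie triple system p has trivial centre.\<close>
definition noncompact_type :: "(real^'n^'n) set \<Rightarrow> bool" where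
  "noncompact_type g \<longleftrightarrow> self_adjoint_lie_algebra g \<and>
     (\<forall>X\<in>ppart g. (\<forall>Y\<in>ppart g. lie_bracket X Y = 0) \<longrightarrow> X = 0)"

definition lie_triple_system :: "(real^'n^'n) set \<Rightarrow> (real^'n^'n) set \<Rightarrow> bool" where
  "lie_triple_system g P \<longleftrightarrow> subspace P \<and> P \<subseteq> ppart g \<and>
     (\<forall>x\<in>P. \<forall>y\<in>P. \<forall>z\<in>P. lie_bracket x (lie_bracket y z) \<in> P)"

text \<open>The totally geodesic submanifold with tangent Lie triple system P splits off an
 isometric R^k factor with tangent space V.\<close>
definition flat_factor :: "(real^'n^'n) set \<Rightarrow> nat \<Rightarrow> (real^'n^'n) set \<Rightarrow> bool" where
  "flat_factor P k V \<longleftrightarrow> subspace V \<and> V \<subseteq> P \<and> dim V = k \<and>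
     (\<forall>v\<in>V. \<forall>x\<in>P. lie_bracket v x = 0)"

definition srk :: "(real^'n^'n) set \<Rightarrow> nat \<Rightarrow> nat" where
  "srk g k = (GREATEST d. \<exists>P V. lie_triple_system g P \<and> flat_factor P k V \<and> dim P = d)"

definition abelian_subspace :: "(real^'n^'n) set \<Rightarrow> (real^'n^'n) set \<Rightarrow> bool" where
  "abelian_subspace g A \<longleftrightarrow> subspace A \<and> A \<subseteq> ppart g \<and>
     (\<forall>x\<in>A. \<forall>y\<in>A. lie_bracket x y = 0)"

definition maximal_abelian :: "(real^'n^'n) set \<Rightarrow> (real^'n^'n) set \<Rightarrow> bool" where
  "maximal_abelian g A \<longleftrightarrow> abelian_subspace g A \<and>
     (\<forall>B. abelian_subspace g B \<and> A \<subseteq> B \<longrightarrow> B = A)"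

definition real_rank :: "(real^'n^'n) set \<Rightarrow> nat" where
  "real_rank g = (GREATEST d. \<exists>A. maximal_abelian g A \<and> dim A = d)"

definition rootspace :: "(real^'n^'n) set \<Rightarrow> (real^'n^'n) set \<Rightarrow> (real^'n^'n \<Rightarrow> real) \<Rightarrow> (real^'n^'n) set" where
  "rootspace g a \<alpha> = {X \<in> g. \<forall>H\<in>a. lie_bracket H X = \<alpha> H *\<^sub>R X}"

text \<open>Restricted roots, as functionals on a (normalised to vanish outside a).\<close>
definition restricted_roots :: "(real^'n^'n) set \<Rightarrow> (real^'n^'n) set \<Rightarrow> (real^'n^'n \<Rightarrow> real) set" where
  "restricted_roots g a = {\<alpha>. (\<forall>H. H \<notin> a \<longrightarrow> \<alpha> H = 0) \<and> (\<exists>H\<in>a. \<alpha> H \<noteq> 0) \<and>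
       rootspace g a \<alpha> \<noteq> {0}}"

definition regular_element :: "(real^'n^'n) set \<Rightarrow> (real^'n^'n) set \<Rightarrow> real^'n^'n \<Rightarrow> bool" where
  "regular_element g a H0 \<longleftrightarrow> H0 \<in> a \<and> (\<forall>\<alpha>\<in>restricted_roots g a. \<alpha> H0 \<noteq> 0)"

definition positive_roots :: "(real^'n^'n) set \<Rightarrow> (real^'n^'n) set \<Rightarrow> real^'n^'n \<Rightarrow> (real^'n^'n \<Rightarrow> real) set" where
  "positive_roots g a H0 = {\<alpha> \<in> restricted_roots g a. \<alpha> H0 > 0}"

definition p_alpha :: "(real^'n^'n) set \<Rightarrow> (real^'n^'n) set \<Rightarrow> (real^'n^'n \<Rightarrow> real) \<Rightarrow> (real^'n^'n) set" where
  "p_alpha g a \<alpha> = ppart g \<inter>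
     {Y + Z | Y Z. Y \<in> rootspace g a \<alpha> \<and> Z \<in> rootspace g a (\<lambda>H. - \<alpha> H)}"

end

theory Submission
  imports Defs
begin


lemma mm_add_r: "((A::real^'n^'n) + B) ** C = A ** C + B ** C"
  by (simp add: matrix_matrix_mult_def vec_eq_iff sum.distrib algebra_simps)
lemma mm_add_l: "(A::real^'n^'n) ** (B + C) = A ** B + A ** C"
  by (simp add: matrix_matrix_mult_def vec_eq_iff sum.distrib algebra_simps)
lemma mm_diff_r: "((A::real^'n^'n) - B) ** C = A ** C - B ** C"
  by (simp add: matrix_matrix_mult_def vec_eq_iff sum_subtractf algebra_simps)
lemma mm_diff_l: "(A::real^'n^'n) ** (B - C) = A ** B - A ** C"
  by (simp add: matrix_matrix_mult_def vec_eq_iff sum_subtractf algebra_simps)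
lemma mm_scale_r: "((c *\<^sub>R A)::real^'n^'n) ** C = c *\<^sub>R (A ** C)"
  by (simp add: matrix_matrix_mult_def vec_eq_iff sum_distrib_left algebra_simps)
lemma mm_scale_l: "(A::real^'n^'n) ** (c *\<^sub>R C) = c *\<^sub>R (A ** C)"
  by (simp add: matrix_matrix_mult_def vec_eq_iff sum_distrib_left algebra_simps)

lemma lb_add_r: "lie_bracket X (Y + Z) = lie_bracket X Y + lie_bracket X Z"
  by (simp add: lie_bracket_def mm_add_l mm_add_r algebra_simps)
lemma lb_add_l: "lie_bracket (X + Y) Z = lie_bracket X Z + lie_bracket Y Z"
  by (simp add: lie_bracket_def mm_add_l mm_add_r algebra_simps)
lemma lb_diff_r: "lie_bracket X (Y - Z) = lie_bracket X Y - lie_bracket X Z"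
  by (simp add: lie_bracket_def mm_diff_l mm_diff_r algebra_simps)
lemma lb_scale_r: "lie_bracket X (c *\<^sub>R Y) = c *\<^sub>R lie_bracket X Y"
  by (simp add: lie_bracket_def mm_scale_l mm_scale_r algebra_simps)
lemma lb_scale_l: "lie_bracket (c *\<^sub>R X) Y = c *\<^sub>R lie_bracket X Y"
  by (simp add: lie_bracket_def mm_scale_l mm_scale_r algebra_simps)
lemma lb_0 [simp]: "lie_bracket X 0 = 0" "lie_bracket 0 X = 0"
  by (simp_all add: lie_bracket_def)
lemma lb_anti: "lie_bracket X Y = - lie_bracket Y X"
  by (simp add: lie_bracket_def)
lemma jacobi: "lie_bracket A (lie_bracket B C) =
   lie_bracket (lie_bracket A B) C + lie_bracket B (lie_bracket A C)"
  by (simp add: lie_bracket_def mm_diff_l mm_diff_r matrix_mul_assoc algebra_simps)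
lemma lb_transpose: "transpose (lie_bracket X Y) = lie_bracket (transpose Y) (transpose X)"
proof -
  have "transpose (A - B) = transpose A - transpose B" for A B :: "real^'a^'a"
    by (simp add: transpose_def vec_eq_iff)
  then show ?thesis by (simp add: lie_bracket_def matrix_transpose_mul)
qed

lemma linear_lb: "linear (lie_bracket H)"
  by (rule linearI) (simp_all add: lb_add_r lb_scale_r)

lemma inner_mm1: "inner ((A::real^'n^'n) ** B) C = inner B (transpose A ** C)"
  by (simp add: inner_vec_def matrix_matrix_mult_def transpose_def sum_distrib_left
     sum_distrib_right algebra_simps; subst sum.swap; subst (2) sum.swap; rule sum.cong; simp;
     subst sum.swap; simp)
lemma inner_mm2: "inner ((A::real^'n^'n) ** B) C = inner A (C ** transpose B)"
  by (simp add: inner_vec_def matrix_matrix_mult_def transpose_def sum_distrib_left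
     sum_distrib_right algebra_simps; subst (2) sum.swap; simp)

lemma lb_selfadj: assumes "transpose H = H"
  shows "inner (lie_bracket H X) Y = inner X (lie_bracket H Y)"
  using assms by (simp only: lie_bracket_def inner_diff_left inner_diff_right inner_mm1[of H X] inner_mm2[of X H])


lemma quad_lemma:
  fixes b d :: real
  assumes "\<And>t. 0 \<le> 2 * t * b + t^2 * d" "0 \<le> d" "0 \<le> b"
  shows "b = 0"
proof (rule ccontr)
  assume "b \<noteq> 0" hence bp: "b > 0" using assms by simp
  define s where "s = b / (d + 1)"
  have sp: "s > 0" using bp assms by (simp add: s_def)
  have "0 \<le> 2 * (-s) * b + (-s)^2 * d" by (rule assms(1))
  hence "0 \<le> s * (s * d - 2 * b)" by (simp add: power2_eq_square algebra_simps)
  hence "0 \<le> s * d - 2 * b" using sp by (simp add: zero_le_mult_iff)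
  moreover have "s * d \<le> b" unfolding s_def using bp assms
    by (simp add: field_simps)
  ultimately show False using bp by simp
qed

lemma selfadj_eigvec:
  fixes f :: "'a::euclidean_space \<Rightarrow> 'a"
  assumes lin: "linear f" and U: "subspace U" "U \<noteq> {0}" and inv: "f ` U \<subseteq> U"
    and sa: "\<And>x y. inner (f x) y = inner x (f y)"
  obtains x c where "x \<in> U" "x \<noteq> 0" "f x = c *\<^sub>R x"
proof -
  let ?S = "U \<inter> sphere 0 1"
  let ?q = "\<lambda>x. inner (f x) x"
  have cS: "compact ?S"
    by (rule closed_Int_compact[OF closed_subspace[OF U(1)] compact_sphere])
  obtain u where u: "u \<in> U" "u \<noteq> 0" using U subspace_0 by blast
  have "(1 / norm u) *\<^sub>R u \<in> ?S" using u U(1) by (simp add: subspace_scale)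
  hence ne: "?S \<noteq> {}" by blast
  have bl: "bounded_linear f" using lin linear_conv_bounded_linear by blast
  have cont: "continuous_on ?S ?q"
    by (intro continuous_intros linear_continuous_on bl)
  obtain x0 where x0: "x0 \<in> ?S" "\<And>y. y \<in> ?S \<Longrightarrow> ?q y \<le> ?q x0"
    using continuous_attains_sup[OF cS ne cont] by blast
  define c where "c = ?q x0"
  have fs: "f (t *\<^sub>R y) = t *\<^sub>R f y" for t y using lin by (simp add: linear_scale)
  have fa: "f (y + z) = f y + f z" for y z using lin by (simp add: linear_add)
  have fd: "f (y - z) = f y - f z" for y z using lin by (simp add: linear_diff)
  have le: "?q y \<le> c * inner y y" if "y \<in> U" for y
  proof (cases "y = 0")
    case True then show ?thesis using lin by (simp add: linear_0)
  next
    case False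
    define z where "z = (1 / norm y) *\<^sub>R y"
    have "z \<in> ?S" using False that U(1) by (simp add: z_def subspace_scale)
    hence "?q z \<le> c" using x0 c_def by blast
    moreover have "?q z = ?q y / (norm y)^2"
      by (simp add: z_def fs power2_eq_square)
    moreover have "inner y y = (norm y)^2" by (simp add: power2_norm_eq_inner)
    ultimately show ?thesis using False by (simp add: field_simps)
  qed
  define w where "w = c *\<^sub>R x0 - f x0"
  have x0U: "x0 \<in> U" and n1: "inner x0 x0 = 1" using x0(1)
    by (auto simp: power2_norm_eq_inner[symmetric])
  have wU: "w \<in> U" unfolding w_def using x0U inv U(1)
    by (simp add: subspace_diff subspace_scale image_subset_iff)
  define d where "d = c * inner w w - ?q w"
  have dpos: "0 \<le> d" using le[OF wU] by (simp add: d_def)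
  have "0 \<le> 2 * t * inner w w + t^2 * d" for t
  proof -
    have "x0 + t *\<^sub>R w \<in> U" using x0U wU U(1) by (simp add: subspace_add subspace_scale)
    hence "0 \<le> c * inner (x0 + t *\<^sub>R w) (x0 + t *\<^sub>R w) - ?q (x0 + t *\<^sub>R w)"
      using le by force
    also have "\<dots> = 2 * t * inner w w + t^2 * d"
    proof -
      have h1: "inner (f x0) x0 = c" by (simp add: c_def)
      have h2: "inner (f w) x0 = inner w (f x0)" by (rule sa)
      have h3: "inner w w = c * inner x0 w - inner (f x0) w"
        by (simp add: w_def inner_diff_left)
      show ?thesis
        using n1 h1 h2 h3
        apply (simp add: fa fs d_def inner_add_left inner_add_right
          inner_commute power2_eq_square algebra_simps)
        subgoal premises p
        proof -
          have "c * (t * (w \<bullet> x0 * 2)) = 2 * t * (c * (w \<bullet> x0))" by (simp add: algebra_simps)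
          also have "\<dots> = 2 * t * (w \<bullet> w + w \<bullet> f x0)" using p(4) by simp
          finally show ?thesis by (simp add: algebra_simps)
        qed
        done
    qed
    finally show ?thesis .
  qed
  hence "inner w w = 0" using quad_lemma dpos by (meson inner_ge_zero)
  hence "f x0 = c *\<^sub>R x0" by (simp add: w_def)
  moreover have "x0 \<noteq> 0" using n1 by auto
  ultimately show ?thesis using that x0U by blast
qed


lemma joint_eig:
  fixes F :: "('a::euclidean_space \<Rightarrow> 'a) set"
  assumes lin: "\<And>f. f\<in>F \<Longrightarrow> linear f"
    and sa: "\<And>f x y. f\<in>F \<Longrightarrow> inner (f x) y = inner x (f y)"
    and com: "\<And>f g x. f\<in>F \<Longrightarrow> g\<in>F \<Longrightarrow> f (g x) = g (f x)"
  shows "subspace U \<Longrightarrow> (\<And>f. f\<in>F \<Longrightarrow> f ` U \<subseteq> U) \<Longrightarrow>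
     U \<subseteq> span {x\<in>U. \<forall>f\<in>F. \<exists>c. f x = c *\<^sub>R x}"
proof (induction "dim U" arbitrary: U rule: less_induct)
  case less
  let ?J = "\<lambda>U. {x\<in>U. \<forall>f\<in>F. \<exists>c. f x = c *\<^sub>R x}"
  show ?case
  proof (cases "\<forall>f\<in>F. \<forall>x\<in>U. \<exists>c. f x = c *\<^sub>R x")
    case True then show ?thesis by (auto intro: span_base)
  next
    case False
    then obtain f x1 where f: "f \<in> F" "x1 \<in> U" "\<And>c. f x1 \<noteq> c *\<^sub>R x1" by blast
    have linf: "linear f" using lin f by blast
    have "x1 \<noteq> 0" using f(3)[of 0] linf by (auto simp: linear_0)
    hence Un0: "U \<noteq> {0}" using f by blast
    obtain x0 c where x0: "x0 \<in> U" "x0 \<noteq> 0" "f x0 = c *\<^sub>R x0"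
      using selfadj_eigvec[OF linf less.prems(1) Un0 less.prems(2)[OF f(1)] sa[OF f(1)]] by blast
    define E where "E = {x\<in>U. f x = c *\<^sub>R x}"
    define E' where "E' = {x\<in>U. \<forall>e\<in>E. inner x e = 0}"
    have sE: "subspace E" using less.prems(1) linf unfolding E_def subspace_def
      by (auto simp: linear_add linear_scale linear_0 algebra_simps)
    have sE': "subspace E'" using less.prems(1) unfolding E'_def subspace_def
      by (auto simp: inner_add_left)
    have "E \<subset> U" using f unfolding E_def by blast
    hence dE: "dim E < dim U" using dim_psubset[of E U] sE less.prems(1) by (metis span_eq_iff)
    have "x0 \<in> E" using x0 by (simp add: E_def)
    hence "x0 \<notin> E'" using x0 unfolding E'_def by (metis (mono_tags, lifting) inner_eq_zero_iff mem_Collect_eq)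
    hence "E' \<subset> U" using x0 unfolding E'_def by blast
    hence dE': "dim E' < dim U" using dim_psubset[of E' U] sE' less.prems(1) by (metis span_eq_iff)
    have invE: "g ` E \<subseteq> E" if g: "g \<in> F" for g
    proof
      fix y assume "y \<in> g ` E"
      then obtain x where x: "x \<in> E" "y = g x" by blast
      have "g x \<in> U" using less.prems(2)[OF g] x E_def by blast
      moreover have "f (g x) = c *\<^sub>R g x" using com[OF f(1) g] x lin[OF g]
        by (simp add: E_def linear_scale)
      ultimately show "y \<in> E" using x by (simp add: E_def)
    qed
    have invE': "g ` E' \<subseteq> E'" if g: "g \<in> F" for g
    proof
      fix y assume "y \<in> g ` E'"
      then obtain x where x: "x \<in> E'" "y = g x" by blast
      have "g x \<in> U" using less.prems(2)[OF g] x E'_def by blast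
      moreover have "inner (g x) e = 0" if "e \<in> E" for e
        using sa[OF g, of x e] invE[OF g] that x(1) by (auto simp: E'_def)
      ultimately show "y \<in> E'" using x by (simp add: E'_def)
    qed
    have IE: "E \<subseteq> span (?J E)" using less.hyps[OF dE sE invE] by blast
    have IE': "E' \<subseteq> span (?J E')" using less.hyps[OF dE' sE' invE'] by blast
    have "?J E \<subseteq> ?J U" "?J E' \<subseteq> ?J U" by (auto simp: E_def E'_def)
    hence IE2: "E \<subseteq> span (?J U)" "E' \<subseteq> span (?J U)" using IE IE' span_mono by blast+
    show ?thesis
    proof
      fix u assume u: "u \<in> U"
      obtain y z where yz: "y \<in> span E" "\<And>w. w \<in> span E \<Longrightarrow> orthogonal z w" "u = y + z"
        using orthogonal_subspace_decomp_exists[of E u] by blast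
      have yE: "y \<in> E" using yz(1) sE by (metis span_eq_iff)
      have "z = u - y" using yz by simp
      hence "z \<in> U" using u yE less.prems(1) by (simp add: E_def subspace_diff)
      hence "z \<in> E'" using yz(2) by (auto simp: E'_def orthogonal_def span_base)
      thus "u \<in> span (?J U)" using yE IE2 yz(3) span_add by blast
    qed
  qed
qed


lemma tr_add: "transpose ((X::real^'n^'n) + Y) = transpose X + transpose Y"
  by (simp add: transpose_def vec_eq_iff)
lemma tr_scale: "transpose (c *\<^sub>R (X::real^'n^'n)) = c *\<^sub>R transpose X"
  by (simp add: transpose_def vec_eq_iff)
lemma tr_0: "transpose (0::real^'n^'n) = 0"
  by (simp add: transpose_def vec_eq_iff)
lemma lb_neg_r: "lie_bracket X (- Y) = - lie_bracket X Y"
  by (simp add: lie_bracket_def matrix_matrix_mult_def vec_eq_iff sum_negf)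

lemma rootspace_scale:
  assumes "X \<in> rootspace g a \<alpha>" "subspace g"
  shows "c *\<^sub>R X \<in> rootspace g a \<alpha>"
  using assms by (auto simp: rootspace_def lb_scale_r subspace_scale)

theorem proposition2p13:
  fixes g P V a :: "(real^'n^'n) set" and k :: nat and H0 :: "real^'n^'n"
  assumes "noncompact_type g"
    and "1 \<le> k" and "k \<le> real_rank g"
    and "lie_triple_system g P"
    and "flat_factor P k V"
    and "dim P = srk g k"
    and "maximal_abelian g a" and "V \<subseteq> a"
    and "regular_element g a H0"
  shows "P = span (a \<union> \<Union> {p_alpha g a \<alpha> | \<alpha>. \<alpha> \<in> positive_roots g a H0 \<and> (\<forall>v\<in>V. \<alpha> v = 0)})"
proof -
  have sg: "subspace g" and brg: "\<And>X Y. X \<in> g \<Longrightarrow> Y \<in> g \<Longrightarrow> lie_bracket X Y \<in> g"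
    and trg: "\<And>X. X \<in> g \<Longrightarrow> transpose X \<in> g"
    using assms(1) by (auto simp: noncompact_type_def self_adjoint_lie_algebra_def)
  have sa: "subspace a" and ap: "a \<subseteq> ppart g"
    and acomm: "\<And>x y. x \<in> a \<Longrightarrow> y \<in> a \<Longrightarrow> lie_bracket x y = 0"
    and amax: "\<And>B. abelian_subspace g B \<Longrightarrow> a \<subseteq> B \<Longrightarrow> B = a"
    using assms(7) by (auto simp: maximal_abelian_def abelian_subspace_def)
  have ag: "a \<subseteq> g" and asym: "\<And>H. H \<in> a \<Longrightarrow> transpose H = H"
    using ap by (auto simp: ppart_def)
  have sP: "subspace P" and Pp: "P \<subseteq> ppart g"
    using assms(4) by (auto simp: lie_triple_system_def)
  have sV: "subspace V" and VP: "V \<subseteq> P" and dV: "dim V = k"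
    and VPc: "\<And>v x. v \<in> V \<Longrightarrow> x \<in> P \<Longrightarrow> lie_bracket v x = 0"
    using assms(5) by (auto simp: flat_factor_def)
  have sp: "subspace (ppart g)" using sg
    by (auto simp: subspace_def ppart_def tr_add tr_scale tr_0)
  define Z where "Z = {X \<in> ppart g. \<forall>v\<in>V. lie_bracket v X = 0}"
  define Zg where "Zg = {X \<in> g. \<forall>v\<in>V. lie_bracket v X = 0}"
  have sZ: "subspace Z" using sp unfolding Z_def subspace_def
    by (auto simp: lb_add_r lb_scale_r)
  have sZg: "subspace Zg" using sg unfolding Zg_def subspace_def
    by (auto simp: lb_add_r lb_scale_r)
  have PZ: "P \<subseteq> Z" using Pp VPc by (auto simp: Z_def)
  have ltsZ: "lie_triple_system g Z"
    unfolding lie_triple_system_def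
  proof (intro conjI ballI)
    show "subspace Z" by (rule sZ)
    show "Z \<subseteq> ppart g" by (auto simp: Z_def)
    fix x y z assume xyz: "x \<in> Z" "y \<in> Z" "z \<in> Z"
    have g3: "x \<in> g" "y \<in> g" "z \<in> g" and t3: "transpose x = x" "transpose y = y" "transpose z = z"
      using xyz by (auto simp: Z_def ppart_def)
    have "lie_bracket x (lie_bracket y z) \<in> g" using g3 brg by blast
    moreover have "transpose (lie_bracket x (lie_bracket y z)) = lie_bracket x (lie_bracket y z)"
    proof -
      have "transpose (lie_bracket x (lie_bracket y z)) = lie_bracket (lie_bracket z y) x"
        by (simp only: lb_transpose t3)
      also have "\<dots> = lie_bracket x (lie_bracket y z)"
        by (simp add: lie_bracket_def mm_diff_l mm_diff_r matrix_mul_assoc algebra_simps)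
      finally show ?thesis .
    qed
    moreover have "lie_bracket v (lie_bracket x (lie_bracket y z)) = 0" if v: "v \<in> V" for v
    proof -
      have "lie_bracket v x = 0" "lie_bracket v y = 0" "lie_bracket v z = 0"
        using xyz v by (auto simp: Z_def)
      thus ?thesis by (simp add: jacobi[of v x] jacobi[of v y])
    qed
    ultimately show "lie_bracket x (lie_bracket y z) \<in> Z" by (simp add: Z_def ppart_def)
  qed
  have ffZ: "flat_factor Z k V" using sV VP PZ dV by (auto simp: flat_factor_def Z_def)
  have "dim Z \<le> srk g k" unfolding srk_def
    by (rule Greatest_le_nat[where b = "DIM(real^'n^'n)"]) (use ltsZ ffZ dim_subset_UNIV[where 'a="real^'n^'n"] in auto)
  hence PZeq: "P = Z" using subspace_dim_equal[OF sP sZ PZ] assms(6) by simp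
  define S where "S = a \<union> \<Union> {p_alpha g a \<alpha> | \<alpha>. \<alpha> \<in> positive_roots g a H0 \<and> (\<forall>v\<in>V. \<alpha> v = 0)}"
  have SZ: "S \<subseteq> Z"
  proof
    fix X assume "X \<in> S"
    then consider "X \<in> a" | \<alpha> where "X \<in> p_alpha g a \<alpha>" "\<forall>v\<in>V. \<alpha> v = 0"
      unfolding S_def by blast
    then show "X \<in> Z"
    proof cases
      case 1 then show ?thesis using ap acomm assms(8) by (auto simp: Z_def)
    next
      case 2
      then obtain Y W where "X \<in> ppart g" "X = Y + W" "Y \<in> rootspace g a \<alpha>"
        "W \<in> rootspace g a (\<lambda>H. - \<alpha> H)" by (auto simp: p_alpha_def)
      then show ?thesis using 2(2) assms(8) by (auto simp: Z_def rootspace_def lb_add_r)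
    qed
  qed
  have spanSZ: "span S \<subseteq> Z" using span_minimal[OF SZ sZ] .
  let ?F = "lie_bracket ` a"
  have ZgJ: "Zg \<subseteq> span {x\<in>Zg. \<forall>f\<in>?F. \<exists>c. f x = c *\<^sub>R x}"
  proof (rule joint_eig[OF _ _ _ sZg])
    show "\<And>f. f \<in> ?F \<Longrightarrow> linear f" using linear_lb by blast
    show "\<And>f x y. f \<in> ?F \<Longrightarrow> inner (f x) y = inner x (f y)" using lb_selfadj asym by blast
    show "\<And>f h x. f \<in> ?F \<Longrightarrow> h \<in> ?F \<Longrightarrow> f (h x) = h (f x)"
    proof -
      fix f h x assume "f \<in> ?F" "h \<in> ?F"
      then obtain H1 H2 where "H1 \<in> a" "H2 \<in> a" "f = lie_bracket H1" "h = lie_bracket H2" by blast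
      then show "f (h x) = h (f x)" using acomm[of H1 H2] jacobi[of H1 H2 x] by simp
    qed
    fix f assume "f \<in> ?F"
    then obtain H where H: "H \<in> a" "f = lie_bracket H" by blast
    show "f ` Zg \<subseteq> Zg"
    proof
      fix Y assume "Y \<in> f ` Zg"
      then obtain X where X: "X \<in> Zg" "Y = lie_bracket H X" using H by blast
      have "lie_bracket v Y = 0" if "v \<in> V" for v
        using X that acomm[of v H] H assms(8) by (auto simp: Zg_def jacobi[of v H X])
      moreover have "Y \<in> g" using X H ag brg by (auto simp: Zg_def)
      ultimately show "Y \<in> Zg" by (simp add: Zg_def)
    qed
  qed
  define sym where "sym = (\<lambda>X::real^'n^'n. (1/2) *\<^sub>R (X + transpose X))"
  have symJ: "sym x \<in> span S" if x: "x \<in> Zg" "\<forall>f\<in>?F. \<exists>c. f x = c *\<^sub>R x" for x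
  proof (cases "x = 0")
    case True then show ?thesis by (simp add: sym_def tr_0 span_0)
  next
    case False
    define \<beta> where "\<beta> = (\<lambda>H. if H \<in> a then (SOME c. lie_bracket H x = c *\<^sub>R x) else 0)"
    have eig: "lie_bracket H x = \<beta> H *\<^sub>R x" if H: "H \<in> a" for H
    proof -
      have "\<exists>c. lie_bracket H x = c *\<^sub>R x" using x(2) H by blast
      then show ?thesis using H someI_ex[of "\<lambda>c. lie_bracket H x = c *\<^sub>R x"] unfolding \<beta>_def by simp
    qed
    have xg: "x \<in> g" using x by (simp add: Zg_def)
    have xtg: "transpose x \<in> g" using trg xg by blast
    have eigt: "lie_bracket H (transpose x) = (- \<beta> H) *\<^sub>R transpose x" if H: "H \<in> a" for H
    proof -
      have "transpose (lie_bracket H x) = lie_bracket (transpose x) H"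
        using asym[OF H] by (simp add: lb_transpose)
      also have "\<dots> = - lie_bracket H (transpose x)" by (rule lb_anti)
      finally have "lie_bracket H (transpose x) = - transpose (lie_bracket H x)" by simp
      also have "\<dots> = (- \<beta> H) *\<^sub>R transpose x" using eig[OF H] by (simp add: tr_scale)
      finally show ?thesis .
    qed
    have xt0: "transpose x \<noteq> 0" using False tr_0 by (metis transpose_transpose)
    have bV: "\<forall>v\<in>V. \<beta> v = 0"
    proof
      fix v assume v: "v \<in> V"
      hence "\<beta> v *\<^sub>R x = 0" using eig[of v] assms(8) x(1) by (auto simp: Zg_def)
      thus "\<beta> v = 0" using False by simp
    qed
    have R1: "x \<in> rootspace g a \<beta>" using xg eig by (simp add: rootspace_def)
    have R2: "transpose x \<in> rootspace g a (\<lambda>H. - \<beta> H)" using xtg eigt by (simp add: rootspace_def)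
    have symdec: "sym x = (1/2) *\<^sub>R x + (1/2) *\<^sub>R transpose x" by (simp add: sym_def scaleR_add_right)
    have symg: "sym x \<in> g" using xg xtg sg symdec by (simp add: subspace_add subspace_scale)
    have symp: "sym x \<in> ppart g" using symg by (simp add: ppart_def sym_def tr_add tr_scale add.commute)
    show ?thesis
    proof (cases "\<forall>H\<in>a. \<beta> H = 0")
      case True
      define s where "s = sym x"
      have sc: "lie_bracket H s = 0" if H: "H \<in> a" for H
        using eig[OF H] eigt[OF H] True H by (simp add: s_def symdec lb_add_r lb_scale_r)
      have sc2: "lie_bracket s H = 0" if H: "H \<in> a" for H
        using sc[OF H] lb_anti[of s H] by simp
      have ss: "lie_bracket s s = 0" by (simp add: lie_bracket_def)
      define B where "B = {H + t *\<^sub>R s | H t. H \<in> a}"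
      have "abelian_subspace g B" unfolding abelian_subspace_def
      proof (intro conjI ballI)
        show "subspace B" unfolding subspace_def B_def
        proof (intro conjI ballI allI)
          show "0 \<in> {H + t *\<^sub>R s | H t. H \<in> a}"
            using sa subspace_0 by (metis (mono_tags, lifting) add.right_neutral mem_Collect_eq scale_zero_left)
          fix X Y assume "X \<in> {H + t *\<^sub>R s | H t. H \<in> a}" "Y \<in> {H + t *\<^sub>R s | H t. H \<in> a}"
          then obtain H1 t1 H2 t2 where h: "H1 \<in> a" "H2 \<in> a" "X = H1 + t1 *\<^sub>R s" "Y = H2 + t2 *\<^sub>R s"
            by blast
          have "X + Y = (H1 + H2) + (t1 + t2) *\<^sub>R s" using h by (simp add: algebra_simps)
          moreover have "H1 + H2 \<in> a" using h sa by (simp add: subspace_add)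
          ultimately show "X + Y \<in> {H + t *\<^sub>R s | H t. H \<in> a}" by blast
        next
          fix c X assume "X \<in> {H + t *\<^sub>R s | H t. H \<in> a}"
          then obtain H1 t1 where h: "H1 \<in> a" "X = H1 + t1 *\<^sub>R s" by blast
          have "c *\<^sub>R X = c *\<^sub>R H1 + (c * t1) *\<^sub>R s" using h by (simp add: algebra_simps)
          moreover have "c *\<^sub>R H1 \<in> a" using h sa by (simp add: subspace_scale)
          ultimately show "c *\<^sub>R X \<in> {H + t *\<^sub>R s | H t. H \<in> a}" by blast
        qed
        show "B \<subseteq> ppart g"
        proof
          fix X assume "X \<in> B"
          then obtain H1 t1 where h: "H1 \<in> a" "X = H1 + t1 *\<^sub>R s" by (auto simp: B_def)
          then show "X \<in> ppart g" using ap sp symp s_def by (auto simp: subspace_add subspace_scale)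
        qed
        fix X Y assume "X \<in> B" "Y \<in> B"
        then obtain H1 t1 H2 t2 where h: "H1 \<in> a" "H2 \<in> a" "X = H1 + t1 *\<^sub>R s" "Y = H2 + t2 *\<^sub>R s"
          by (auto simp: B_def)
        then show "lie_bracket X Y = 0"
          using acomm[of H1 H2] sc[of H1] sc2[of H2] ss
          by (simp add: lb_add_l lb_add_r lb_scale_l lb_scale_r)
      qed
      moreover have "a \<subseteq> B" unfolding B_def by force
      ultimately have "B = a" using amax by blast
      moreover have "s \<in> B"
      proof -
        have "(0::real^'n^'n) \<in> a" using sa subspace_0 by blast
        moreover have "s = 0 + 1 *\<^sub>R s" by simp
        ultimately show ?thesis unfolding B_def by blast
      qed
      ultimately have "sym x \<in> S" by (simp add: s_def S_def)
      then show ?thesis by (rule span_base)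
    next
      case False
      then obtain H1 where H1: "H1 \<in> a" "\<beta> H1 \<noteq> 0" by blast
      have rr: "\<beta> \<in> restricted_roots g a"
        unfolding restricted_roots_def using H1 R1 \<open>x \<noteq> 0\<close> by (auto simp: \<beta>_def)
      have rr2: "(\<lambda>H. - \<beta> H) \<in> restricted_roots g a"
        unfolding restricted_roots_def using H1 R2 xt0 by (auto simp: \<beta>_def)
      have "\<beta> H0 \<noteq> 0" using assms(9) rr by (simp add: regular_element_def)
      then consider "\<beta> H0 > 0" | "\<beta> H0 < 0" by linarith
      then have "sym x \<in> S"
      proof cases
        case 1
        have "sym x \<in> p_alpha g a \<beta>" unfolding p_alpha_def
          using symp symdec rootspace_scale[OF R1 sg] rootspace_scale[OF R2 sg] by blast
        moreover have "\<beta> \<in> positive_roots g a H0" using rr 1 by (simp add: positive_roots_def)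
        ultimately show ?thesis using bV unfolding S_def by blast
      next
        case 2
        let ?\<gamma> = "\<lambda>H. - \<beta> H"
        have R1': "x \<in> rootspace g a (\<lambda>H. - ?\<gamma> H)" using R1 by simp
        have "sym x = (1/2) *\<^sub>R transpose x + (1/2) *\<^sub>R x" using symdec by simp
        hence "sym x \<in> p_alpha g a ?\<gamma>" unfolding p_alpha_def
          using symp rootspace_scale[OF R1' sg] rootspace_scale[OF R2 sg] by blast
        moreover have "?\<gamma> \<in> positive_roots g a H0" using rr2 2 by (simp add: positive_roots_def)
        moreover have "\<forall>v\<in>V. ?\<gamma> v = 0" using bV by simp
        ultimately show ?thesis unfolding S_def by blast
      qed
      then show ?thesis by (rule span_base)
    qed
  qed
  have sym_add: "sym (X + Y) = sym X + sym Y" for X Y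
    by (simp add: sym_def tr_add algebra_simps)
  have sym_scale: "sym (c *\<^sub>R X) = c *\<^sub>R sym X" for c X
    by (simp add: sym_def tr_scale algebra_simps)
  have sym_0: "sym 0 = 0" by (simp add: sym_def tr_0)
  have subsp: "subspace {X. sym X \<in> span S}"
    unfolding subspace_def by (simp add: sym_add sym_scale sym_0 span_0 span_add span_scale)
  have "span {x\<in>Zg. \<forall>f\<in>?F. \<exists>c. f x = c *\<^sub>R x} \<subseteq> {X. sym X \<in> span S}"
    by (rule span_minimal[OF _ subsp]) (use symJ in blast)
  hence "Z \<subseteq> span S"
  proof -
    assume h: "span {x\<in>Zg. \<forall>f\<in>?F. \<exists>c. f x = c *\<^sub>R x} \<subseteq> {X. sym X \<in> span S}"
    show ?thesis
    proof
      fix X assume X: "X \<in> Z"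
      hence "X \<in> Zg" "transpose X = X" by (auto simp: Z_def Zg_def ppart_def)
      hence "sym X \<in> span S" using h ZgJ by blast
      moreover have "sym X = X" using \<open>transpose X = X\<close> by (simp add: sym_def scaleR_2[symmetric])
      ultimately show "X \<in> span S" by simp
    qed
  qed
  with spanSZ PZeq show ?thesis unfolding S_def by blast
qed

end
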